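(* Let $E$ be a real non-zero essential matrix and let $(R_a, R_b)$ be its twisted pair of rotations. Suppose that for some $\tau \in [-1,3]$, $$\frac{1}{2}(\tau^2 - 1)\operatorname{tr}(EE^{\mathrm T}) + (\tau + 1)\operatorname{tr}(E^2) - \tau\,(\operatorname{tr} E)^2 = 0.$$ Then $\tau = \operatorname{tr} R_a$ or $\tau = \operatorname{tr} R_b$.
   Context: For a 3-vector $a$, $[a]_\times$ denotes the $3\times 3$ skew-symmetric matrix with $[a]_\times b = a\times b$ for every $b$. An essential matrix is a matrix of the form $E = [t]_\times R$ with $R\in\mathrm{SO}(3)$ and $t\in\mathbb{R}^3$. For a real non-zero essential matrix $E$, the twisted pair of rotations is the pair $R_a, R_b \in \mathrm{SO}(3)$ defined as follows. Write $E = [t]_\times R_a$ with $t \neq 0$, and set $R_b = \left(\frac{2tt^{\mathrm T}}{\|t\|^2} - I\right) R_a$. Then $E \sim [t]_\times R_b$, where $\sim$ denotes equality up to a non-zero scalar factor. Moreover, $R_a$ and $R_b$ are exactly the rotations $R$ for which $E \sim [t']_\times R$ for some $t'\in\mathbb{R}^3$. *)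

theory Defs
  imports "HOL-Analysis.Analysis"
begin

definition skew :: "real^3 \<Rightarrow> real^3^3" where
  "skew a = matrix (\<lambda>b. cross3 a b)"

definition essential :: "real^3^3 \<Rightarrow> bool" where
  "essential E \<longleftrightarrow> (\<exists>t R. rotation_matrix R \<and> E = skew t ** R)"

definition twist :: "real^3 \<Rightarrow> real^3^3 \<Rightarrow> real^3^3" where
  "twist t Ra = ((\<chi> i j. 2 * (t$i) * (t$j) / (norm t)^2) - mat 1) ** Ra"

end

theory Submission
  imports Defs
begin

lemma skew_entries: "skew t = (\<chi> i j. if i=1 then (if j=1 then 0 else if j=2 then -(t$3) else t$2)
  else if i=2 then (if j=1 then t$3 else if j=2 then 0 else -(t$1))
  else (if j=1 then -(t$2) else if j=2 then t$1 else 0))"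
  unfolding skew_def matrix_def
  by (simp add: vec_eq_iff forall_3 cross3_def axis_def vector_def)

lemma trace3: "trace (A::real^3^3) = A$1$1 + A$2$2 + A$3$3"
  by (simp add: trace_def sum_3)

lemma mult3: "((A::real^3^3) ** B)$i$j = A$i$1*B$1$j + A$i$2*B$2$j + A$i$3*B$3$j"
  by (simp add: matrix_matrix_mult_def sum_3)

lemma E_entries:
  "(skew t ** R) $ i $ j = (if i=1 then -(t$3)*R$2$j + t$2*R$3$j
     else if i=2 then t$3*R$1$j - t$1*R$3$j else -(t$2)*R$1$j + t$1*R$2$j)"
  by (simp add: mult3 skew_entries)

lemma orth_entries:
  fixes R :: "real^3^3"
  assumes "transpose R ** R = mat 1"
  shows "R$1$1*R$1$1+R$2$1*R$2$1+R$3$1*R$3$1 = 1"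
    "R$1$1*R$1$2+R$2$1*R$2$2+R$3$1*R$3$2 = 0"
    "R$1$1*R$1$3+R$2$1*R$2$3+R$3$1*R$3$3 = 0"
    "R$1$2*R$1$1+R$2$2*R$2$1+R$3$2*R$3$1 = 0"
    "R$1$2*R$1$2+R$2$2*R$2$2+R$3$2*R$3$2 = 1"
    "R$1$2*R$1$3+R$2$2*R$2$3+R$3$2*R$3$3 = 0"
    "R$1$3*R$1$1+R$2$3*R$2$1+R$3$3*R$3$1 = 0"
    "R$1$3*R$1$2+R$2$3*R$2$2+R$3$3*R$3$2 = 0"
    "R$1$3*R$1$3+R$2$3*R$2$3+R$3$3*R$3$3 = 1"
  using assms[unfolded vec_eq_iff, rule_format]
  by (simp_all add: mult3 transpose_def mat_def forall_3)

lemma det_entries: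
  fixes R :: "real^3^3"
  assumes "det R = 1"
  shows "R$1$1*R$2$2*R$3$3 + R$1$2*R$2$3*R$3$1 + R$1$3*R$2$1*R$3$2
       - R$1$1*R$2$3*R$3$2 - R$1$2*R$2$1*R$3$3 - R$1$3*R$2$2*R$3$1 = 1"
  using assms by (simp add: det_3)


lemma id1: fixes t1 t2 t3 r11 r12 r13 r21 r22 r23 r31 r32 r33 :: real assumes "r11*r11+r21*r21+r31*r31 = 1" and "r11*r12+r21*r22+r31*r32 = 0" and "r11*r13+r21*r23+r31*r33 = 0" and "r12*r11+r22*r21+r32*r31 = 0" and "r12*r12+r22*r22+r32*r32 = 1" and "r12*r13+r22*r23+r32*r33 = 0" and "r13*r11+r23*r21+r33*r31 = 0" and "r13*r12+r23*r22+r33*r32 = 0" and "r13*r13+r23*r23+r33*r33 = 1" and "r11*r22*r33 + r12*r23*r31 + r13*r21*r32 - r11*r23*r32 - r12*r21*r33 - r13*r22*r31 = 1"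
 shows "(((0)*r11+(-t3)*r21+(t2)*r31)*((0)*r11+(-t3)*r21+(t2)*r31)+((0)*r12+(-t3)*r22+(t2)*r32)*((t3)*r11+(0)*r21+(-t1)*r31)+((0)*r13+(-t3)*r23+(t2)*r33)*((-t2)*r11+(t1)*r21+(0)*r31)+((t3)*r11+(0)*r21+(-t1)*r31)*((0)*r12+(-t3)*r22+(t2)*r32)+((t3)*r12+(0)*r22+(-t1)*r32)*((t3)*r12+(0)*r22+(-t1)*r32)+((t3)*r13+(0)*r23+(-t1)*r33)*((-t2)*r12+(t1)*r22+(0)*r32)+((-t2)*r11+(t1)*r21+(0)*r31)*((0)*r13+(-t3)*r23+(t2)*r33)+((-t2)*r12+(t1)*r22+(0)*r32)*((t3)*r13+(0)*r23+(-t1)*r33)+((-t2)*r13+(t1)*r23+(0)*r33)*((-t2)*r13+(t1)*r23+(0)*r33)) - (((0)*r11+(-t3)*r21+(t2)*r31)+((t3)*r12+(0)*r22+(-t1)*r32)+((-t2)*r13+(t1)*r23+(0)*r33))^2 = -2*(t1*r11*t1+t1*r12*t2+t1*r13*t3+t2*r21*t1+t2*r22*t2+t2*r23*t3+t3*r31*t1+t3*r32*t2+t3*r33*t3)" using assms by algebra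
lemma id2: fixes t1 t2 t3 r11 r12 r13 r21 r22 r23 r31 r32 r33 :: real assumes "r11*r11+r21*r21+r31*r31 = 1" and "r11*r12+r21*r22+r31*r32 = 0" and "r11*r13+r21*r23+r31*r33 = 0" and "r12*r11+r22*r21+r32*r31 = 0" and "r12*r12+r22*r22+r32*r32 = 1" and "r12*r13+r22*r23+r32*r33 = 0" and "r13*r11+r23*r21+r33*r31 = 0" and "r13*r12+r23*r22+r33*r32 = 0" and "r13*r13+r23*r23+r33*r33 = 1" and "r11*r22*r33 + r12*r23*r31 + r13*r21*r32 - r11*r23*r32 - r12*r21*r33 - r13*r22*r31 = 1"
 shows "(((0)*r11+(-t3)*r21+(t2)*r31)*((0)*r11+(-t3)*r21+(t2)*r31)+((0)*r12+(-t3)*r22+(t2)*r32)*((t3)*r11+(0)*r21+(-t1)*r31)+((0)*r13+(-t3)*r23+(t2)*r33)*((-t2)*r11+(t1)*r21+(0)*r31)+((t3)*r11+(0)*r21+(-t1)*r31)*((0)*r12+(-t3)*r22+(t2)*r32)+((t3)*r12+(0)*r22+(-t1)*r32)*((t3)*r12+(0)*r22+(-t1)*r32)+((t3)*r13+(0)*r23+(-t1)*r33)*((-t2)*r12+(t1)*r22+(0)*r32)+((-t2)*r11+(t1)*r21+(0)*r31)*((0)*r13+(-t3)*r23+(t2)*r33)+((-t2)*r12+(t1)*r22+(0)*r32)*((t3)*r13+(0)*r23+(-t1)*r33)+((-t2)*r13+(t1)*r23+(0)*r33)*((-t2)*r13+(t1)*r23+(0)*r33)) - (t1^2+t2^2+t3^2)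 = 2*(r11+r22+r33)*(t1*r11*t1+t1*r12*t2+t1*r13*t3+t2*r21*t1+t2*r22*t2+t2*r23*t3+t3*r31*t1+t3*r32*t2+t3*r33*t3) - (t1^2+t2^2+t3^2)*(r11+r22+r33)^2" using assms by algebra


lemma orth_entries2:
  fixes R :: "real^3^3"
  assumes "R ** transpose R = mat 1"
  shows "R$1$1*R$1$1+R$1$2*R$1$2+R$1$3*R$1$3 = 1"
  using assms[unfolded vec_eq_iff, rule_format]
  by (simp_all add: mult3 transpose_def mat_def forall_3)

lemma key1:
  fixes R :: "real^3^3"
  assumes "transpose R ** R = mat 1" "det R = 1"
  shows "trace (skew t ** R ** (skew t ** R)) - (trace (skew t ** R))^2 = -2 * (t \<bullet> (R *v t))"
proof -
  note h = id1[where ?t1.0 = "t$1" and ?t2.0 = "t$2" and ?t3.0 = "t$3" and ?r11.0 = "R$1$1" and ?r12.0 = "R$1$2" and ?r13.0 = "R$1$3" and ?r21.0 = "R$2$1" and ?r22.0 = "R$2$2" and ?r23.0 = "R$2$3" and ?r31.0 = "R$3$1" and ?r32.0 = "R$3$2" and ?r33.0 = "R$3$3",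
    OF orth_entries[OF assms(1)] det_entries[OF assms(2)]]
  show ?thesis
    apply (simp add: trace3 mult3 skew_entries inner_vec_def matrix_vector_mult_def sum_3)
    using h by algebra
qed

lemma key2:
  fixes R :: "real^3^3"
  assumes "transpose R ** R = mat 1" "det R = 1"
  shows "trace (skew t ** R ** (skew t ** R)) - (t \<bullet> t) = 2 * trace R * (t \<bullet> (R *v t)) - (t \<bullet> t) * (trace R)^2"
proof -
  note h = id2[where ?t1.0 = "t$1" and ?t2.0 = "t$2" and ?t3.0 = "t$3" and ?r11.0 = "R$1$1" and ?r12.0 = "R$1$2" and ?r13.0 = "R$1$3" and ?r21.0 = "R$2$1" and ?r22.0 = "R$2$2" and ?r23.0 = "R$2$3" and ?r31.0 = "R$3$1" and ?r32.0 = "R$3$2" and ?r33.0 = "R$3$3",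
    OF orth_entries[OF assms(1)] det_entries[OF assms(2)]]
  show ?thesis
    apply (simp add: trace3 mult3 skew_entries inner_vec_def matrix_vector_mult_def sum_3)
    using h by algebra
qed

lemma key3:
  fixes R :: "real^3^3"
  assumes "R ** transpose R = mat 1"
  shows "trace (skew t ** R ** transpose (skew t ** R)) = 2 * (t \<bullet> t)"
proof -
  have "skew t ** R ** transpose (skew t ** R) = skew t ** (R ** transpose R) ** transpose (skew t)"
    by (simp add: matrix_transpose_mul matrix_mul_assoc)
  also have "\<dots> = skew t ** transpose (skew t)" using assms by simp
  finally show ?thesis
    by (simp add: trace3 mult3 skew_entries transpose_def inner_vec_def sum_3 power2_eq_square algebra_simps)
qed

lemma key4_aux: fixes t :: "real^3" and R :: "real^3^3" and c :: real
 assumes sc: "(t $ 1 * t $ 1 + t $ 2 * t $ 2 + t $ 3 * t $ 3) * c = 2"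
 shows "(t $ 1 * t $ 1 + t $ 2 * t $ 2 + t $ 3 * t $ 3) *
     ((c * t $ 1 * t $ 1 - 1) * R $ 1 $ 1 + c * t $ 1 * t $ 2 * R $ 2 $ 1 +
      c * t $ 1 * t $ 3 * R $ 3 $ 1 +
      (c * t $ 2 * t $ 1 * R $ 1 $ 2 + (c * t $ 2 * t $ 2 - 1) * R $ 2 $ 2 +
       c * t $ 2 * t $ 3 * R $ 3 $ 2) +
      (c * t $ 3 * t $ 1 * R $ 1 $ 3 + c * t $ 3 * t $ 2 * R $ 2 $ 3 +
       (c * t $ 3 * t $ 3 - 1) * R $ 3 $ 3)) =
     2 *
     (t $ 1 * (R $ 1 $ 1 * t $ 1 + R $ 1 $ 2 * t $ 2 + R $ 1 $ 3 * t $ 3)) +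
     2 *
     (t $ 2 * (R $ 2 $ 1 * t $ 1 + R $ 2 $ 2 * t $ 2 + R $ 2 $ 3 * t $ 3)) +
     2 *
     (t $ 3 * (R $ 3 $ 1 * t $ 1 + R $ 3 $ 2 * t $ 2 + R $ 3 $ 3 * t $ 3)) -
     (t $ 1 * t $ 1 + t $ 2 * t $ 2 + t $ 3 * t $ 3) *
     (R $ 1 $ 1 + R $ 2 $ 2 + R $ 3 $ 3)" (is "?L = ?R")
proof -
  let ?s = "t $ 1 * t $ 1 + t $ 2 * t $ 2 + t $ 3 * t $ 3"
  let ?p = "t $ 1 * (R $ 1 $ 1 * t $ 1 + R $ 1 $ 2 * t $ 2 + R $ 1 $ 3 * t $ 3) + t $ 2 * (R $ 2 $ 1 * t $ 1 + R $ 2 $ 2 * t $ 2 + R $ 2 $ 3 * t $ 3) + t $ 3 * (R $ 3 $ 1 * t $ 1 + R $ 3 $ 2 * t $ 2 + R $ 3 $ 3 * t $ 3)"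
  have "?L = (?s * c) * ?p - ?s * (R $ 1 $ 1 + R $ 2 $ 2 + R $ 3 $ 3)" by (simp add: algebra_simps)
  also have "\<dots> = ?R" unfolding sc by (simp add: algebra_simps)
  finally show ?thesis .
qed

lemma key4:
  fixes R :: "real^3^3"
  assumes "t \<noteq> 0"
  shows "(t \<bullet> t) * trace (twist t R) = 2 * (t \<bullet> (R *v t)) - (t \<bullet> t) * trace R"
proof -
  define c where "c = 2 / (norm t)^2"
  have rw: "\<And>x y. 2 * x * y / (norm t)^2 = c * x * y" by (simp add: c_def)
  have s: "(norm t)^2 = t \<bullet> t" by (simp add: power2_norm_eq_inner)
  have nz: "t \<bullet> t \<noteq> 0" using assms by simp
  have sc: "(t$1*t$1 + t$2*t$2 + t$3*t$3) * c = 2"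
  proof -
    have "(t \<bullet> t) * c = 2" using nz by (simp add: c_def s)
    then show ?thesis by (simp add: inner_vec_def sum_3 add.assoc)
  qed
  show ?thesis
    unfolding twist_def rw
    apply (simp add: trace3 mult3 mat_def inner_vec_def matrix_vector_mult_def sum_3)
    by (fact key4_aux[OF sc])
qed

theorem proposition2:
  fixes E :: "real^3^3" and t :: "real^3" and Ra :: "real^3^3" and \<tau> :: real
  assumes "essential E" and "E \<noteq> 0"
    and "t \<noteq> 0" and "rotation_matrix Ra" and "E = skew t ** Ra"
    and "-1 \<le> \<tau>" and "\<tau> \<le> 3"
    and "(1/2) * (\<tau>^2 - 1) * trace (E ** transpose E) + (\<tau> + 1) * trace (E ** E)
           - \<tau> * (trace E)^2 = 0"
  shows "\<tau> = trace Ra \<or> \<tau> = trace (twist t Ra)"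
proof -
  have o1: "transpose Ra ** Ra = mat 1" and o2: "Ra ** transpose Ra = mat 1" and d: "det Ra = 1"
    using assms(4) by (auto simp: rotation_matrix_def orthogonal_matrix_def)
  define s where "s = t \<bullet> t"
  define p where "p = t \<bullet> (Ra *v t)"
  define a where "a = trace Ra"
  define b where "b = trace (twist t Ra)"
  define A where "A = trace (E ** E)"
  define B where "B = (trace E)^2"
  have spos: "s > 0" using assms(3) by (simp add: s_def)
  have e1: "A - B = -2 * p" using key1[OF o1 d, of t] by (simp add: A_def B_def p_def assms(5))
  have e2: "A - s = 2 * a * p - s * a^2" using key2[OF o1 d, of t] by (simp add: A_def s_def a_def p_def assms(5))
  have e3: "trace (E ** transpose E) = 2 * s" using key3[OF o2, of t] by (simp add: s_def assms(5))
  have e4: "s * b = 2 * p - s * a" using key4[OF assms(3), of Ra] by (simp add: s_def b_def p_def a_def)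
  have h: "(1/2) * (\<tau>^2 - 1) * (2 * s) + (\<tau> + 1) * A - \<tau> * B = 0"
    using assms(8) e3 by (simp add: A_def B_def)
  have "s * ((\<tau> - a) * (\<tau> - b)) = 0"
    using h e1 e2 e4 by algebra
  then have "(\<tau> - a) * (\<tau> - b) = 0" using spos by simp
  then show ?thesis by (simp add: a_def b_def)
qed

end
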